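(* Let $n=2^k$ for an integer $k\ge1$ and $\omega_n=e^{2\pi i/n}$. Define $$A_{n}=\{\Re(\omega_n^t):t\in\mathbb{Z},\ 0\le t<2^{k-2}\},\qquad B_{n}=\{i\,\Im(\omega_n^t):t\in\mathbb{Z},\ 0<t\le 2^{k-2}\}.$$ Then $A_n\cup B_n$ is a basis for $\mathbb{Q}(\omega_n)$ over $\mathbb{Q}$. Moreover, for every integer $t$, all coordinates of $\Re(\omega_n^t)$ and of $i\,\Im(\omega_n^t)$ with respect to this basis lie in $\{-1,0,1\}$.
   Context: $\Re$ and $\Im$ denote real and imaginary parts. *)

theory Defs
  imports Complex_Main
begin

definition is_subfield :: "complex set \<Rightarrow> bool" where
  "is_subfield S \<longleftrightarrow> 0 \<in> S \<and> 1 \<in> S \<and>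
     (\<forall>x\<in>S. \<forall>y\<in>S. x + y \<in> S \<and> x - y \<in> S \<and> x * y \<in> S) \<and>
     (\<forall>x\<in>S. x \<noteq> 0 \<longrightarrow> inverse x \<in> S)"

definition rat_adjoin :: "complex \<Rightarrow> complex set" where
  "rat_adjoin a = \<Inter>{S. is_subfield S \<and> a \<in> S}"

definition rat_span :: "complex set \<Rightarrow> complex set" where
  "rat_span X = {\<Sum>x\<in>X. of_rat (c x) * x | c. True}"

definition rat_independent :: "complex set \<Rightarrow> bool" where
  "rat_independent X \<longleftrightarrow>
     (\<forall>c :: complex \<Rightarrow> rat. (\<Sum>x\<in>X. of_rat (c x) * x) = 0 \<longrightarrow> (\<forall>x\<in>X. c x = 0))"

definition rat_basis_of :: "complex set \<Rightarrow> complex set \<Rightarrow> bool" where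
  "rat_basis_of X V \<longleftrightarrow> finite X \<and> X \<subseteq> V \<and> rat_independent X \<and> rat_span X = V"

definition omega :: "nat \<Rightarrow> complex" where
  "omega n = exp (2 * of_real pi * \<i> / of_nat n)"

text \<open>A_n = {Re(w^t) : 0 <= t < 2^(k-2)},  B_n = {i Im(w^t) : 0 < t <= 2^(k-2)}
  (the bounds written as 4t < 2^k and 0 < 4t <= 2^k to allow k = 1).\<close>
definition A_set :: "nat \<Rightarrow> complex set" where
  "A_set k = {complex_of_real (Re (omega (2^k) powi t)) | t :: int. 0 \<le> t \<and> 4 * t < 2^k}"

definition B_set :: "nat \<Rightarrow> complex set" where
  "B_set k = {\<i> * complex_of_real (Im (omega (2^k) powi t)) | t :: int. 0 < t \<and> 4 * t \<le> 2^k}"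

end

theory Submission
  imports Defs "Berlekamp_Zassenhaus.Factor_Bound"
begin

lemma pow2_dvd_odd: "odd (c::nat) \<Longrightarrow> (2::nat)^s dvd j * c \<Longrightarrow> 2^s dvd j"
proof (induction s arbitrary: j)
  case 0 then show ?case by simp
next
  case (Suc s)
  have "2^s dvd j * c" using Suc.prems(2) dvd_trans[of "2^s" "2^Suc s" "j*c"] by simp
  then obtain j' where j: "j = 2^s * j'" using Suc by (meson dvdE)
  have "2^s * 2 dvd 2^s * (j' * c)" using Suc.prems(2) by (simp add: j mult.assoc mult.commute)
  hence "2 dvd j' * c" by (simp del: mult_dvd_mono)
  hence "2 dvd j'" using Suc.prems(1) by simp
  thus ?case by (simp add: j)
qed

lemma even_choose_pow2:
  assumes "0 < j" "j < 2^s"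
  shows "even ((2^s) choose j)"
proof (rule ccontr)
  assume odd: "odd ((2::nat)^s choose j)"
  have "j * (2^s choose j) = 2^s * ((2^s - 1) choose (j - 1))"
    using assms(1) by (rule times_binomial_minus1_eq)
  hence dv: "(2::nat)^s dvd j * (2^s choose j)" by simp
  have "(2::nat)^s dvd j" using dv odd pow2_dvd_odd by blast
  with assms show False by (simp add: nat_dvd_not_less)
qed

lemma eis_aux:
  fixes G H :: "int poly"
  assumes c0: "even (coeff G 0)" "odd (coeff H 0)"
    and mid: "\<And>j. 0 < j \<Longrightarrow> j < degree (G*H) \<Longrightarrow> even (coeff (G*H) j)"
    and lc: "odd (lead_coeff (G*H))"
  shows "degree G = 0 \<or> degree H = 0"
proof (rule ccontr)
  assume "\<not> (degree G = 0 \<or> degree H = 0)"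
  hence dG: "degree G > 0" and dH: "degree H > 0" by auto
  hence G0: "G \<noteq> 0" and H0: "H \<noteq> 0" by auto
  have "odd (lead_coeff G)" using lc by (simp add: lead_coeff_mult)
  define i where "i = (LEAST i. odd (coeff G i))"
  have oi: "odd (coeff G i)" unfolding i_def by (rule LeastI) (fact \<open>odd (lead_coeff G)\<close>)
  have ile: "i \<le> degree G" unfolding i_def by (rule Least_le) (fact \<open>odd (lead_coeff G)\<close>)
  have ev: "even (coeff G a)" if "a < i" for a using not_less_Least[OF that[unfolded i_def]] i_def by blast
  have ipos: "i > 0" using oi c0 by (cases i) auto
  have "coeff (G*H) i = (\<Sum>a\<le>i. coeff G a * coeff H (i - a))" by (rule coeff_mult)
  also have "\<dots> = (\<Sum>a<i. coeff G a * coeff H (i - a)) + coeff G i * coeff H 0"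
    by (simp add: lessThan_Suc_atMost[symmetric])
  finally have eq: "coeff (G*H) i = (\<Sum>a<i. coeff G a * coeff H (i - a)) + coeff G i * coeff H 0" .
  have "even (\<Sum>a<i. coeff G a * coeff H (i - a))"
    by (rule dvd_sum) (use ev in auto)
  moreover have "odd (coeff G i * coeff H 0)" using oi c0 by simp
  ultimately have "odd (coeff (G*H) i)" unfolding eq by simp
  moreover have "i < degree (G*H)" using ile dH G0 H0 by (simp add: degree_mult_eq)
  ultimately show False using mid ipos by blast
qed

lemma eis:
  fixes G H :: "int poly"
  assumes c0: "coeff (G*H) 0 = 2"
    and mid: "\<And>j. 0 < j \<Longrightarrow> j < degree (G*H) \<Longrightarrow> even (coeff (G*H) j)"
    and lc: "odd (lead_coeff (G*H))"
  shows "degree G = 0 \<or> degree H = 0"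
proof -
  have pr: "coeff G 0 * coeff H 0 = 2" using c0 by (simp add: coeff_mult_0)
  have "(even (coeff G 0) \<and> odd (coeff H 0)) \<or> (even (coeff H 0) \<and> odd (coeff G 0))"
  proof (cases "even (coeff G 0)")
    case True
    then obtain a where a: "coeff G 0 = 2 * a" by blast
    show ?thesis
    proof (cases "even (coeff H 0)")
      case True
      then obtain b where "coeff H 0 = 2 * b" by blast
      with a pr have "4 * (a*b) = 2" by (simp add: algebra_simps)
      hence False by presburger
      thus ?thesis ..
    qed (use True in auto)
  next
    case False
    have "even (coeff G 0 * coeff H 0)" using pr by simp
    hence "even (coeff H 0)" using False by simp
    with False show ?thesis by auto
  qed
  thus ?thesis
  proof
    assume "even (coeff G 0) \<and> odd (coeff H 0)"
    thus ?thesis using eis_aux[of G H] mid lc by auto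
  next
    assume h: "even (coeff H 0) \<and> odd (coeff G 0)"
    show ?thesis using eis_aux[of H G] h mid lc by (auto simp: mult.commute)
  qed
qed


lemma E_coeff:
  fixes m :: nat assumes "j \<le> m"
  shows "coeff ([:1,1:]^m + 1 :: int poly) j = int (m choose j) + (if j = 0 then 1 else 0)"
  using assms coeff_linear_poly_power[of j m "1::int" 1] by (simp add: coeff_1)

lemma Phi_factor_int:
  fixes g h :: "int poly"
  assumes "monom 1 (2^s) + 1 = g * h"
  shows "degree g = 0 \<or> degree h = 0"
proof -
  let ?L = "[:1,1:] :: int poly"
  let ?m = "2^s :: nat"
  have mpos: "?m > 0" by simp
  have "(monom 1 ?m + 1) \<circ>\<^sub>p ?L = ?L^?m + 1"
    by (simp add: pcompose_add monom_altdef pcompose_pCons pcompose_hom.hom_power pcompose_smult)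
  hence E: "?L^?m + 1 = (g \<circ>\<^sub>p ?L) * (h \<circ>\<^sub>p ?L)" using assms by (simp add: pcompose_mult)
  have dL: "degree (?L^?m) = ?m" by (rule degree_linear_power)
  have dE: "degree (?L^?m + 1) = ?m" using mpos
    by (subst degree_add_eq_left) (simp_all only: dL, auto)
  have "degree (g \<circ>\<^sub>p ?L) = 0 \<or> degree (h \<circ>\<^sub>p ?L) = 0"
  proof (rule eis, unfold E[symmetric] dE)
    show "coeff (?L^?m + 1) 0 = 2" using E_coeff[of 0 ?m] by simp
    show "odd (coeff (?L^?m + 1) ?m)" using E_coeff[of ?m ?m] mpos dE by simp
    fix j assume "0 < j" "j < ?m"
    thus "even (coeff (?L^?m + 1) j)" using E_coeff[of j ?m] even_choose_pow2[of j s]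
      by simp
  qed
  thus ?thesis by (simp add: degree_pcompose)
qed

lemma Phi_factor_rat:
  fixes g h :: "rat poly"
  assumes "monom 1 (2^s) + 1 = g * h"
  shows "degree g = 0 \<or> degree h = 0"
proof -
  have "of_int_poly (monom 1 (2^s) + 1 :: int poly) = g * h" using assms
    by (simp add: hom_distribs of_int_hom.map_poly_hom_monom)
  from rat_to_int_factor[OF this] obtain g' h' :: "int poly" where
    "monom 1 (2^s) + 1 = g' * h'" "degree g' = degree g" "degree h' = degree h" by blast
  thus ?thesis using Phi_factor_int by metis
qed

lemma Phi_irreducible: "irreducible (monom 1 (2^s) + 1 :: rat poly)"
proof (rule irreducibleI)
  have d: "degree (monom 1 (2^s) + 1 :: rat poly) = 2^s"
    by (subst degree_add_eq_left) (auto simp: degree_monom_eq)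
  have "(2::nat)^s \<noteq> 0" by simp
  thus nz: "monom 1 (2^s) + 1 \<noteq> (0 :: rat poly)" using d by (metis degree_0)
  show "\<not> is_unit (monom 1 (2^s) + 1 :: rat poly)" using d nz by (simp add: is_unit_iff_degree)
  fix a b :: "rat poly" assume ab: "monom 1 (2^s) + 1 = a * b"
  hence "a \<noteq> 0" "b \<noteq> 0" using nz by auto
  thus "is_unit a \<or> is_unit b" using Phi_factor_rat[OF ab] by (auto simp: is_unit_iff_degree)
qed


lemma omega_cis: "omega n = cis (2 * pi / real n)"
  by (simp add: omega_def cis_conv_exp mult.commute)

lemma omega_powi: "omega n powi t = cis (2 * pi * real_of_int t / real n)"
  by (simp add: omega_cis cis_power_int algebra_simps)

lemma omega_pow: "omega n ^ j = cis (2 * pi * real j / real n)"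
  by (simp add: omega_cis DeMoivre algebra_simps)

lemma omega_nz: "omega n \<noteq> 0" by (simp add: omega_def)

lemma omega_half:
  assumes "k \<ge> 1" shows "omega (2^k) ^ (2^(k-1)) = -1"
proof -
  have "real (2^(k-1)) / real ((2::nat)^k) = 1/2"
    using assms by (cases k) auto
  hence h: "2 * pi * real (2^(k-1)) / real ((2::nat)^k) = pi" by (simp add: field_simps)
  show ?thesis by (simp only: omega_pow h cis_pi)
qed

definition ev :: "nat \<Rightarrow> rat poly \<Rightarrow> complex" where
  "ev k p = poly (map_poly of_rat p) (omega (2^k))"

definition Phi :: "nat \<Rightarrow> rat poly" where
  "Phi k = monom 1 (2^(k-1)) + 1"

lemma mp_add: "map_poly (of_rat :: rat \<Rightarrow> complex) (p + q) = map_poly of_rat p + map_poly of_rat q"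
  by (rule poly_eqI) (simp add: coeff_map_poly of_rat_add)
lemma mp_diff: "map_poly (of_rat :: rat \<Rightarrow> complex) (p - q) = map_poly of_rat p - map_poly of_rat q"
  by (rule poly_eqI) (simp add: coeff_map_poly of_rat_diff)
lemma mp_mult: "map_poly (of_rat :: rat \<Rightarrow> complex) (p * q) = map_poly of_rat p * map_poly of_rat q"
  by (rule poly_eqI) (simp add: coeff_map_poly coeff_mult of_rat_sum of_rat_mult)

lemma ev_add[simp]: "ev k (p + q) = ev k p + ev k q"
  by (simp add: ev_def mp_add mp_diff mp_mult)
lemma ev_mult[simp]: "ev k (p * q) = ev k p * ev k q"
  by (simp add: ev_def mp_add mp_diff mp_mult)
lemma ev_diff[simp]: "ev k (p - q) = ev k p - ev k q"
  by (simp add: ev_def mp_add mp_diff mp_mult)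
lemma ev_smult[simp]: "ev k (smult c p) = of_rat c * ev k p"
  by (simp add: ev_def of_rat_hom.map_poly_hom_smult)
lemma ev_const[simp]: "ev k [:c:] = of_rat c"
  by (simp add: ev_def of_rat_hom.map_poly_pCons_hom)
lemma ev_0[simp]: "ev k 0 = 0" by (simp add: ev_def)
lemma ev_1[simp]: "ev k 1 = 1" by (simp add: ev_def)
lemma ev_monom[simp]: "ev k (monom c j) = of_rat c * omega (2^k) ^ j"
  by (simp add: ev_def of_rat_hom.map_poly_hom_monom poly_monom)
lemma ev_pCons[simp]: "ev k (pCons a p) = of_rat a + omega (2^k) * ev k p"
  by (simp add: ev_def of_rat_hom.map_poly_pCons_hom)

lemma ev_Phi: "k \<ge> 1 \<Longrightarrow> ev k (Phi k) = 0"
  using omega_half[of k] by (simp add: Phi_def)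

lemma Phi_irr: "irreducible (Phi k)"
  unfolding Phi_def by (rule Phi_irreducible)

lemma degree_Phi: "degree (Phi k) = 2^(k-1)"
  unfolding Phi_def by (subst degree_add_eq_left) (auto simp: degree_monom_eq)

lemma ev_inverse:
  assumes k: "k \<ge> 1" and nd: "\<not> Phi k dvd p"
  shows "\<exists>a. ev k a * ev k p = 1"
proof -
  define g where "g = gcd (Phi k) p"
  have "g dvd Phi k" unfolding g_def by simp
  then obtain h where gh: "Phi k = g * h" by (elim dvdE)
  from irreducibleD[OF Phi_irr gh] have "is_unit g \<or> is_unit h" .
  moreover have "\<not> is_unit h"
  proof
    assume "is_unit h"
    hence "Phi k dvd g" using gh by (simp add: mult_unit_dvd_iff)
    hence "Phi k dvd p" unfolding g_def using dvd_trans gcd_dvd2 by blast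
    with nd show False by simp
  qed
  ultimately have ug: "is_unit g" by blast
  hence g0: "g \<noteq> 0" by auto
  with ug have "degree g = 0" by (simp add: is_unit_iff_degree)
  then obtain c where gc: "g = [:c:]" by (elim degree_eq_zeroE)
  with g0 have c0: "c \<noteq> 0" by simp
  obtain x y where "bezout_coefficients (Phi k) p = (x, y)" by force
  from bezout_coefficients[OF this] have "x * Phi k + y * p = g" by (simp add: g_def)
  hence "ev k x * ev k (Phi k) + ev k y * ev k p = ev k g"
    by (metis ev_add ev_mult)
  hence "ev k y * ev k p = of_rat c" using ev_Phi[OF k] gc by simp
  hence "ev k (smult (inverse c) y) * ev k p = 1" using c0
    by (simp add: mult.assoc of_rat_inverse)
  thus ?thesis by blast
qed

lemma ev_zero_dvd: "k \<ge> 1 \<Longrightarrow> ev k p = 0 \<Longrightarrow> Phi k dvd p"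
  using ev_inverse by fastforce

lemma ev_zero_deg:
  assumes "k \<ge> 1" "ev k p = 0" "degree p < 2^(k-1)"
  shows "p = 0"
proof (rule ccontr)
  assume "p \<noteq> 0"
  with ev_zero_dvd[OF assms(1,2)] have "degree (Phi k) \<le> degree p" by (rule dvd_imp_degree_le)
  with assms(3) show False by (simp add: degree_Phi)
qed


lemma subfield_nat: "is_subfield S \<Longrightarrow> of_nat n \<in> S"
  by (induction n) (auto simp: is_subfield_def)

lemma subfield_int: "is_subfield S \<Longrightarrow> of_int z \<in> S"
proof (cases z rule: int_cases)
  case (nonneg n) assume "is_subfield S" thus ?thesis using subfield_nat nonneg by simp
next
  case (neg n) assume S: "is_subfield S"
  have "0 - of_nat (Suc n) \<in> S" using S subfield_nat[OF S, of "Suc n"] unfolding is_subfield_def by blast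
  moreover have "of_int z = 0 - (of_nat (Suc n) :: complex)" using neg by simp
  ultimately show ?thesis by simp
qed

lemma subfield_rat:
  assumes S: "is_subfield S" shows "of_rat r \<in> S"
proof -
  obtain a b where r: "quotient_of r = (a, b)" by force
  have b: "b > 0" using quotient_of_denom_pos[OF r] .
  have "r = of_int a / of_int b" using quotient_of_div[OF r] .
  hence "of_rat r = (of_int a :: complex) * inverse (of_int b)"
    by (simp add: of_rat_divide divide_inverse of_rat_mult of_rat_inverse)
  moreover have "inverse (of_int b :: complex) \<in> S" using S subfield_int[OF S, of b] b
    unfolding is_subfield_def by auto
  ultimately show ?thesis using S subfield_int[OF S, of a] unfolding is_subfield_def by auto
qed

lemma subfield_sum:
  assumes S: "is_subfield S" and f: "\<And>x. x \<in> X \<Longrightarrow> f x \<in> S"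
  shows "(\<Sum>x\<in>X. f x) \<in> S"
  using f
proof (induction X rule: infinite_finite_induct)
  case (infinite A) thus ?case using S by (simp add: is_subfield_def)
next
  case empty thus ?case using S by (simp add: is_subfield_def)
next
  case (insert x F) thus ?case using S by (simp add: is_subfield_def)
qed

lemma ev_in_subfield:
  assumes S: "is_subfield S" and w: "omega (2^k) \<in> S"
  shows "ev k p \<in> S"
proof (induction p rule: pCons_induct)
  case 0 thus ?case using S by (simp add: is_subfield_def)
next
  case (pCons a p)
  thus ?case using S w subfield_rat[OF S, of a] by (simp add: is_subfield_def)
qed

lemma range_ev_subfield:
  assumes k: "k \<ge> 1" shows "is_subfield (range (ev k))"
  unfolding is_subfield_def
proof (intro conjI ballI impI)
  show "0 \<in> range (ev k)" by (metis ev_0 rangeI)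
  show "1 \<in> range (ev k)" by (metis ev_1 rangeI)
  fix x y assume "x \<in> range (ev k)" "y \<in> range (ev k)"
  then obtain p q where x: "x = ev k p" and y: "y = ev k q" by blast
  show "x + y \<in> range (ev k)" by (metis ev_add rangeI x y)
  show "x - y \<in> range (ev k)" by (metis ev_diff rangeI x y)
  show "x * y \<in> range (ev k)" by (metis ev_mult rangeI x y)
next
  fix x assume "x \<in> range (ev k)" "x \<noteq> 0"
  then obtain p where x: "x = ev k p" "ev k p \<noteq> 0" by blast
  have "\<not> Phi k dvd p"
  proof
    assume "Phi k dvd p" then obtain q where "p = Phi k * q" by (elim dvdE)
    thus False using x ev_Phi[OF k] by simp
  qed
  from ev_inverse[OF k this] obtain a where "ev k a * ev k p = 1" by blast
  hence "inverse x = ev k a" using x by (simp add: field_simps inverse_unique)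
  thus "inverse x \<in> range (ev k)" by simp
qed

lemma omega_ev: "omega (2^k) = ev k [:0, 1:]" by simp

lemma rat_adjoin_eq:
  assumes k: "k \<ge> 1" shows "rat_adjoin (omega (2^k)) = range (ev k)"
proof
  show "rat_adjoin (omega (2^k)) \<subseteq> range (ev k)"
    unfolding rat_adjoin_def using range_ev_subfield[OF k] omega_ev[of k] by blast
  show "range (ev k) \<subseteq> rat_adjoin (omega (2^k))"
    unfolding rat_adjoin_def using ev_in_subfield by blast
qed


definition z :: "nat \<Rightarrow> int \<Rightarrow> complex" where "z k t = omega (2^k) powi t"
definition cr :: "nat \<Rightarrow> int \<Rightarrow> complex" where "cr k t = complex_of_real (Re (z k t))"
definition ci :: "nat \<Rightarrow> int \<Rightarrow> complex" where "ci k t = \<i> * complex_of_real (Im (z k t))"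

lemma A_set_alt: "A_set k = {cr k t | t. 0 \<le> t \<and> 4 * t < 2^k}"
  by (simp add: A_set_def cr_def z_def)
lemma B_set_alt: "B_set k = {ci k t | t. 0 < t \<and> 4 * t \<le> 2^k}"
  by (simp add: B_set_def ci_def z_def)

lemma z_neg: "z k (-t) = cnj (z k t)"
  by (simp add: z_def omega_powi cis_cnj)

lemma z_add: "z k (a + b) = z k a * z k b"
  by (simp add: z_def power_int_add omega_nz)

lemma z_M: assumes "k \<ge> 1" shows "z k (2^(k-1)) = -1"
proof -
  have "z k (2^(k-1)) = z k (int (2^(k-1)))" by simp
  also have "\<dots> = -1" unfolding z_def power_int_of_nat using omega_half[OF assms] .
  finally show ?thesis .
qed

lemma z_N: assumes "k \<ge> 1" shows "z k (2^k) = 1"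
proof -
  have "(2::int)^k = 2^(k-1) + 2^(k-1)" using assms by (cases k) auto
  hence "z k (2^k) = z k (2^(k-1)) * z k (2^(k-1))" using z_add by metis
  thus ?thesis using z_M[OF assms] by simp
qed

lemma z_mod: assumes "k \<ge> 1" shows "z k (t mod 2^k) = z k t"
proof -
  have "z k (2^k * (t div 2^k)) = 1"
    unfolding z_def power_int_mult using z_N[OF assms] by (simp add: z_def)
  moreover have "t = t mod 2^k + 2^k * (t div 2^k)" by simp
  ultimately show ?thesis using z_add by (metis mult.right_neutral)
qed

lemma z_Nminus: assumes "k \<ge> 1" shows "z k (2^k - r) = cnj (z k r)"
  using z_add[of k "-r" "2^k"] z_N[OF assms] z_neg by simp

lemma z_Mminus: assumes "k \<ge> 1" shows "z k (2^(k-1) - r) = - cnj (z k r)"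
  using z_add[of k "-r" "2^(k-1)"] z_M[OF assms] z_neg by simp

lemma cr_Nminus: "k \<ge> 1 \<Longrightarrow> cr k (2^k - r) = cr k r"
  by (simp add: cr_def z_Nminus)
lemma ci_Nminus: "k \<ge> 1 \<Longrightarrow> ci k (2^k - r) = - ci k r"
  by (simp add: ci_def z_Nminus)
lemma cr_Mminus: "k \<ge> 1 \<Longrightarrow> cr k (2^(k-1) - r) = - cr k r"
  unfolding cr_def using z_Mminus[of k r] by simp
lemma ci_Mminus: "k \<ge> 1 \<Longrightarrow> ci k (2^(k-1) - r) = ci k r"
  unfolding ci_def using z_Mminus[of k r] by simp
lemma cr_mod: "k \<ge> 1 \<Longrightarrow> cr k (t mod 2^k) = cr k t"
  by (simp add: cr_def z_mod)
lemma ci_mod: "k \<ge> 1 \<Longrightarrow> ci k (t mod 2^k) = ci k t"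
  by (simp add: ci_def z_mod)
lemma ci_0: "ci k 0 = 0" by (simp add: ci_def z_def)

lemma reduce_half:
  assumes k: "k \<ge> 1"
  obtains r where "0 \<le> r" "2 * r \<le> 2^k" "cr k t = cr k r" "ci k t = ci k r \<or> ci k t = - ci k r"
proof -
  define N :: int where "N = 2^k"
  have Npos: "N > 0" by (simp add: N_def)
  define r where "r = t mod N"
  have r: "0 \<le> r" "r < N" using Npos by (simp_all add: r_def)
  have e: "cr k t = cr k r" "ci k t = ci k r" using cr_mod[OF k] ci_mod[OF k] by (simp_all add: r_def N_def)
  show ?thesis
  proof (cases "2 * r \<le> N")
    case True thus ?thesis using that r e by (auto simp: N_def)
  next
    case False
    have "cr k (N - r) = cr k r" "ci k (N - r) = - ci k r"
      using cr_Nminus[OF k] ci_Nminus[OF k] by (simp_all add: N_def)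
    thus ?thesis using that[of "N - r"] False r e by (auto simp: N_def)
  qed
qed

lemma cr_cases:
  assumes k: "k \<ge> 1"
  shows "cr k t \<in> A_set k \<or> - cr k t \<in> A_set k \<or> cr k t = 0"
proof -
  define N :: int where "N = 2^k"
  define M :: int where "M = 2^(k-1)"
  have NM: "N = 2 * M" using k by (cases k) (auto simp: N_def M_def)
  obtain r where r: "0 \<le> r" "2 * r \<le> N" "cr k t = cr k r" using reduce_half[OF k, of t] N_def by metis
  have crM: "cr k (M - r) = - cr k r" using cr_Mminus[OF k] by (simp add: M_def)
  consider "4 * r < N" | "4 * r = N" | "4 * r > N" by linarith
  thus ?thesis
  proof cases
    case 1 thus ?thesis using r unfolding A_set_alt N_def by auto
  next
    case 2 hence "M - r = r" using NM by linarith
    hence "cr k r = 0" using crM by simp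
    thus ?thesis using r by simp
  next
    case 3
    have "- cr k t = cr k (M - r)" using crM r by simp
    moreover have "0 \<le> M - r" using r NM by linarith
    moreover have "4 * (M - r) < N" using 3 NM by (simp add: algebra_simps)
    ultimately show ?thesis unfolding A_set_alt N_def by blast
  qed
qed

lemma ci_cases:
  assumes k: "k \<ge> 1"
  shows "ci k t \<in> B_set k \<or> - ci k t \<in> B_set k \<or> ci k t = 0"
proof -
  define N :: int where "N = 2^k"
  define M :: int where "M = 2^(k-1)"
  have NM: "N = 2 * M" using k by (cases k) (auto simp: N_def M_def)
  obtain r where r: "0 \<le> r" "2 * r \<le> N" "ci k t = ci k r \<or> ci k t = - ci k r"
    using reduce_half[OF k, of t] N_def by metis
  have ciM: "ci k (M - r) = ci k r" using ci_Mminus[OF k] by (simp add: M_def)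
  obtain s where s: "0 \<le> s" "4 * s \<le> N" "ci k r = ci k s"
  proof (cases "4 * r \<le> N")
    case True thus ?thesis using that r by auto
  next
    case False thus ?thesis using that[of "M - r"] r ciM NM by auto
  qed
  show ?thesis
  proof (cases "s = 0")
    case True thus ?thesis using s r ci_0 by auto
  next
    case False
    hence "ci k s \<in> B_set k" using s unfolding B_set_alt N_def by auto
    thus ?thesis using r s by auto
  qed
qed


lemma cr_cos: "cr k t = complex_of_real (cos (2 * pi * of_int t / 2^k))"
  by (simp add: cr_def z_def omega_powi)
lemma ci_sin: "ci k t = \<i> * complex_of_real (sin (2 * pi * of_int t / 2^k))"
  by (simp add: ci_def z_def omega_powi)

definition TA :: "nat \<Rightarrow> int set" where "TA k = {t. 0 \<le> t \<and> 4 * t < 2^k}"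
definition TB :: "nat \<Rightarrow> int set" where "TB k = {t. 0 < t \<and> 4 * t \<le> 2^k}"

lemma A_img: "A_set k = cr k ` TA k" by (auto simp: A_set_alt TA_def)
lemma B_img: "B_set k = ci k ` TB k" by (auto simp: B_set_alt TB_def)

lemma fin_TA: "finite (TA k)"
  by (rule finite_subset[of _ "{0..2^k}"]) (auto simp: TA_def)
lemma fin_TB: "finite (TB k)"
  by (rule finite_subset[of _ "{0..2^k}"]) (auto simp: TB_def)

lemma angle_bounds:
  assumes "0 \<le> t" "4 * t \<le> 2^k"
  shows "0 \<le> 2 * pi * of_int t / 2^k" "2 * pi * of_int t / 2^k \<le> pi / 2"
proof -
  have "real_of_int (4 * t) \<le> 2^k" using assms(2) by (metis of_int_le_iff of_int_numeral of_int_power)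
  hence h: "4 * real_of_int t \<le> 2^k" by simp
  show "0 \<le> 2 * pi * of_int t / 2^k" using assms(1) by simp
  have "2 * pi * of_int t / 2^k \<le> 2 * pi * (2^k / 4) / 2^k"
    by (intro divide_right_mono mult_left_mono) (use h in auto)
  also have "\<dots> = pi / 2" by simp
  finally show "2 * pi * of_int t / 2^k \<le> pi / 2" .
qed

lemma angle_less:
  assumes "0 \<le> t" "4 * t < 2^k"
  shows "2 * pi * of_int t / 2^k < pi / 2"
proof -
  have "real_of_int (4 * t) < 2^k" using assms(2) by (metis of_int_less_iff of_int_numeral of_int_power)
  hence h: "4 * real_of_int t < 2^k" by simp
  have "2 * pi * of_int t / 2^k < 2 * pi * (2^k / 4) / 2^k"
    by (intro divide_strict_right_mono mult_strict_left_mono) (use h in auto)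
  also have "\<dots> = pi / 2" by simp
  finally show ?thesis .
qed

lemma angle_inj:
  assumes "2 * pi * of_int t / 2^k = 2 * pi * of_int s / (2^k :: real)"
  shows "t = s"
  using assms by (simp add: field_simps)

lemma inj_cr: "inj_on (cr k) (TA k)"
proof
  fix t s assume ts: "t \<in> TA k" "s \<in> TA k" "cr k t = cr k s"
  have eq: "cos (2 * pi * of_int t / 2^k) = cos (2 * pi * of_int s / 2^k)" using ts by (simp add: cr_cos)
  have "2 * pi * of_int t / 2^k = 2 * pi * of_int s / (2^k :: real)"
  proof (rule cos_inj_pi)
    have t: "0 \<le> t" "4 * t \<le> 2^k" "0 \<le> s" "4 * s \<le> 2^k" using ts(1,2) unfolding TA_def by auto
    note a = angle_bounds[OF t(1,2)] angle_bounds[OF t(3,4)]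
    show "0 \<le> 2 * pi * of_int t / 2^k" "0 \<le> 2 * pi * of_int s / 2^k" using a by simp_all
    show "2 * pi * of_int t / 2^k \<le> pi" "2 * pi * of_int s / 2^k \<le> pi" using a pi_gt_zero by linarith+
    show "cos (2 * pi * of_int t / 2^k) = cos (2 * pi * of_int s / 2^k)" by (rule eq)
  qed
  thus "t = s" by (rule angle_inj)
qed

lemma inj_ci: "inj_on (ci k) (TB k)"
proof
  fix t s assume ts: "t \<in> TB k" "s \<in> TB k" "ci k t = ci k s"
  have eq: "sin (2 * pi * of_int t / 2^k) = sin (2 * pi * of_int s / 2^k)" using ts by (simp add: ci_sin)
  have "2 * pi * of_int t / 2^k = 2 * pi * of_int s / (2^k :: real)"
  proof (rule sin_inj_pi)
    have t: "0 \<le> t" "4 * t \<le> 2^k" "0 \<le> s" "4 * s \<le> 2^k" using ts(1,2) unfolding TB_def by auto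
    note a = angle_bounds[OF t(1,2)] angle_bounds[OF t(3,4)]
    show "- (pi/2) \<le> 2 * pi * of_int t / 2^k" "- (pi/2) \<le> 2 * pi * of_int s / 2^k" using a pi_gt_zero by linarith+
    show "2 * pi * of_int t / 2^k \<le> pi/2" "2 * pi * of_int s / 2^k \<le> pi/2" using a by simp_all
    show "sin (2 * pi * of_int t / 2^k) = sin (2 * pi * of_int s / 2^k)" by (rule eq)
  qed
  thus "t = s" by (rule angle_inj)
qed

lemma AB_disjoint: "A_set k \<inter> B_set k = {}"
proof -
  have "cr k t \<noteq> ci k s" if "t \<in> TA k" for t s
  proof
    assume "cr k t = ci k s"
    hence "Re (cr k t) = 0" by (simp add: ci_sin)
    moreover have "cos (2 * pi * of_int t / 2^k) > 0"
    proof (rule cos_gt_zero_pi)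
      have t: "0 \<le> t" "4 * t < 2^k" using that unfolding TA_def by auto
      note a = angle_bounds[OF t(1)] angle_less[OF t]
      show "- (pi/2) < 2 * pi * of_int t / 2^k" using a t pi_gt_zero by (smt (verit) divide_nonneg_nonneg mult_nonneg_nonneg of_int_nonneg zero_le_power)
      show "2 * pi * of_int t / 2^k < pi/2" using a by simp
    qed
    ultimately show False by (simp add: cr_cos)
  qed
  thus ?thesis unfolding A_img B_img by blast
qed

lemma card_T:
  assumes k: "k \<ge> 1" shows "card (TA k) + card (TB k) = 2^(k-1)"
proof -
  define M :: int where "M = 2^(k-1)"
  have NM: "(2::int)^k = 2 * M" using k by (cases k) (auto simp: M_def)
  have inj: "inj_on (\<lambda>t. M - t) (TB k)" by (auto simp: inj_on_def)
  have dis: "TA k \<inter> (\<lambda>t. M - t) ` TB k = {}" by (auto simp: TA_def TB_def NM)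
  have un: "TA k \<union> (\<lambda>t. M - t) ` TB k = {0..<M}"
  proof
    show "TA k \<union> (\<lambda>t. M - t) ` TB k \<subseteq> {0..<M}" by (auto simp: TA_def TB_def NM)
    show "{0..<M} \<subseteq> TA k \<union> (\<lambda>t. M - t) ` TB k"
    proof
      fix s assume s: "s \<in> {0..<M}"
      show "s \<in> TA k \<union> (\<lambda>t. M - t) ` TB k"
      proof (cases "4 * s < 2^k")
        case True thus ?thesis using s by (auto simp: TA_def)
      next
        case False
        hence "M - s \<in> TB k" using s by (auto simp: TB_def NM)
        moreover have "s = M - (M - s)" by simp
        ultimately show ?thesis by blast
      qed
    qed
  qed
  have "card (TA k) + card (TB k) = card (TA k) + card ((\<lambda>t. M - t) ` TB k)"
    using card_image[OF inj] by simp
  also have "\<dots> = card (TA k \<union> (\<lambda>t. M - t) ` TB k)"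
    using dis fin_TA fin_TB by (simp add: card_Un_disjoint)
  also have "\<dots> = nat M" using un by simp
  finally show ?thesis by (simp add: M_def nat_power_eq)
qed

lemma card_AB:
  assumes k: "k \<ge> 1"
  shows "finite (A_set k \<union> B_set k)" "card (A_set k \<union> B_set k) = 2^(k-1)"
proof -
  show "finite (A_set k \<union> B_set k)" using fin_TA fin_TB by (simp add: A_img B_img)
  have "card (A_set k \<union> B_set k) = card (A_set k) + card (B_set k)"
    using AB_disjoint fin_TA fin_TB by (simp add: A_img B_img card_Un_disjoint)
  also have "\<dots> = card (TA k) + card (TB k)"
    using card_image[OF inj_cr] card_image[OF inj_ci] by (simp add: A_img B_img)
  finally show "card (A_set k \<union> B_set k) = 2^(k-1)" using card_T[OF k] by simp
qed


interpretation qvs: vector_space "\<lambda>(r::rat) (x::complex). of_rat r * x"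
  by unfold_locales (simp_all add: algebra_simps of_rat_add of_rat_mult)

lemma rat_span_eq: "finite X \<Longrightarrow> rat_span X = qvs.span X"
  by (simp add: qvs.span_finite rat_span_def full_SetCompr_eq)

lemma rat_indep_eq: "finite X \<Longrightarrow> rat_independent X \<longleftrightarrow> qvs.independent X"
  by (simp add: qvs.dependent_finite rat_independent_def) blast

lemma ev_sum: "ev k (\<Sum>i\<in>I. f i) = (\<Sum>i\<in>I. ev k (f i))"
  by (induction I rule: infinite_finite_induct) simp_all

definition W :: "nat \<Rightarrow> complex set" where
  "W k = (\<lambda>j. omega (2^k) ^ j) ` {..<2^(k-1)}"

lemma fin_W: "finite (W k)" by (simp add: W_def)

lemma inj_W: assumes k: "k \<ge> 1" shows "inj_on (\<lambda>j. omega (2^k) ^ j) {..<2^(k-1)}"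
proof
  fix i j assume ij: "i \<in> {..<2^(k-1)}" "j \<in> {..<2^(k-1)}" "omega (2^k) ^ i = omega (2^k) ^ j"
  have "ev k (monom 1 i - monom 1 j) = 0" using ij by simp
  moreover have "degree (monom (1::rat) i - monom 1 j) < 2^(k-1)"
    using degree_diff_le_max[of "monom (1::rat) i" "monom 1 j"] ij by (simp add: degree_monom_eq)
  ultimately have "monom (1::rat) i - monom 1 j = 0" using ev_zero_deg[OF k] by blast
  hence "coeff (monom (1::rat) i) i = coeff (monom 1 j) i" by simp
  thus "i = j" by (simp split: if_splits)
qed

lemma indep_W: assumes k: "k \<ge> 1" shows "qvs.independent (W k)"
proof
  assume "qvs.dependent (W k)"
  then obtain u where u: "\<exists>v\<in>W k. u v \<noteq> 0" "(\<Sum>v\<in>W k. of_rat (u v) * v) = 0"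
    using qvs.dependent_finite[OF fin_W] by auto
  define m :: nat where "m = 2^(k-1)"
  have mpos: "m \<ge> 1" by (simp add: m_def)
  define P where "P = (\<Sum>j<m. monom (u (omega (2^k) ^ j)) j)"
  have "(\<Sum>v\<in>W k. of_rat (u v) * v) = (\<Sum>j<m. of_rat (u (omega (2^k) ^ j)) * omega (2^k) ^ j)"
    unfolding W_def m_def by (subst sum.reindex[OF inj_W[OF k]]) simp
  also have "\<dots> = ev k P" by (simp add: P_def ev_sum)
  finally have "ev k P = 0" using u(2) by simp
  moreover have "degree P < 2^(k-1)"
  proof -
    have "degree P \<le> m - 1" unfolding P_def
      by (rule degree_sum_le) (auto intro: order.trans[OF degree_monom_le])
    moreover have "m - 1 < m" using mpos by simp
    ultimately show ?thesis unfolding m_def by linarith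
  qed
  ultimately have P0: "P = 0" using ev_zero_deg[OF k] by blast
  from u(1) obtain j where j: "j < m" "u (omega (2^k) ^ j) \<noteq> 0" unfolding W_def m_def by auto
  have "coeff P j = u (omega (2^k) ^ j)"
    unfolding P_def coeff_sum coeff_monom using j(1) by (simp add: sum.delta)
  with P0 j show False by simp
qed

lemma card_W: assumes k: "k \<ge> 1" shows "card (W k) = 2^(k-1)"
  unfolding W_def using card_image[OF inj_W[OF k]] by simp

lemma subspace_range_ev: "qvs.subspace (range (ev k))"
  unfolding qvs.subspace_def
proof (intro conjI ballI allI)
  show "0 \<in> range (ev k)" by (metis ev_0 rangeI)
  fix x y assume "x \<in> range (ev k)" "y \<in> range (ev k)"
  then obtain p q where "x = ev k p" "y = ev k q" by blast
  thus "x + y \<in> range (ev k)" by (metis ev_add rangeI)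
next
  fix c :: rat and x assume "x \<in> range (ev k)"
  then obtain p where "x = ev k p" by blast
  thus "of_rat c * x \<in> range (ev k)" by (metis ev_smult rangeI)
qed

lemma ev_in_span_W:
  assumes k: "k \<ge> 1" shows "ev k p \<in> qvs.span (W k)"
proof -
  define q where "q = p mod Phi k"
  have "(2::nat)^(k-1) \<noteq> 0" by simp
  hence P0: "Phi k \<noteq> 0" using degree_Phi[of k] by (metis degree_0)
  have "p = p div Phi k * Phi k + q" by (simp add: q_def)
  hence "ev k p = ev k q" using ev_Phi[OF k] by (metis add_0 ev_add ev_mult mult_zero_right)
  moreover have "ev k q \<in> qvs.span (W k)"
  proof (cases "q = 0")
    case True thus ?thesis by (simp add: qvs.span_zero)
  next
    case False
    hence dq: "degree q < 2^(k-1)" using degree_mod_less'[OF P0] by (simp add: q_def degree_Phi)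
    have "ev k q = (\<Sum>i\<le>degree q. of_rat (coeff q i) * omega (2^k) ^ i)"
      unfolding ev_def by (subst poly_altdef) (simp add: of_rat_hom.degree_map_poly_hom coeff_map_poly)
    also have "\<dots> \<in> qvs.span (W k)"
    proof (rule qvs.span_sum)
      fix i assume "i \<in> {..degree q}"
      hence "omega (2^k) ^ i \<in> W k" using dq unfolding W_def by auto
      thus "of_rat (coeff q i) * omega (2^k) ^ i \<in> qvs.span (W k)"
        by (intro qvs.span_scale qvs.span_base)
    qed
    finally show ?thesis .
  qed
  ultimately show ?thesis by simp
qed

lemma span_W: assumes k: "k \<ge> 1" shows "qvs.span (W k) = range (ev k)"
proof
  have "omega (2^k) ^ j \<in> range (ev k)" for j using ev_monom[of k 1 j] by (metis mult_1 of_rat_1 rangeI)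
  hence "W k \<subseteq> range (ev k)" unfolding W_def by auto
  thus "qvs.span (W k) \<subseteq> range (ev k)" by (intro qvs.span_minimal subspace_range_ev)
  show "range (ev k) \<subseteq> qvs.span (W k)" using ev_in_span_W[OF k] by blast
qed


lemma sf_add: "is_subfield S \<Longrightarrow> x \<in> S \<Longrightarrow> y \<in> S \<Longrightarrow> x + y \<in> S"
  unfolding is_subfield_def by blast
lemma sf_diff: "is_subfield S \<Longrightarrow> x \<in> S \<Longrightarrow> y \<in> S \<Longrightarrow> x - y \<in> S"
  unfolding is_subfield_def by blast
lemma sf_mult: "is_subfield S \<Longrightarrow> x \<in> S \<Longrightarrow> y \<in> S \<Longrightarrow> x * y \<in> S"
  unfolding is_subfield_def by blast

lemma z_in_range: assumes k: "k \<ge> 1" shows "z k t \<in> range (ev k)"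
proof -
  have F: "is_subfield (range (ev k))" by (rule range_ev_subfield[OF k])
  have pos: "z k (int j) \<in> range (ev k)" for j
    using ev_monom[of k 1 j] by (metis mult_1 of_rat_1 rangeI z_def power_int_of_nat)
  show ?thesis
  proof (cases "t \<ge> 0")
    case True thus ?thesis using pos[of "nat t"] by simp
  next
    case False
    define j where "j = nat (-t)"
    have tj: "t = - int j" using False by (simp add: j_def)
    have "z k t = inverse (z k (int j))" by (simp add: tj z_def power_int_minus)
    moreover have "z k (int j) \<noteq> 0" by (simp add: z_def omega_nz)
    moreover have "\<forall>x\<in>range (ev k). x \<noteq> 0 \<longrightarrow> inverse x \<in> range (ev k)" using F unfolding is_subfield_def by blast
    ultimately show ?thesis using pos[of j] by metis
  qed
qed

lemma cr_ci_in_range: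
  assumes k: "k \<ge> 1" shows "cr k t \<in> range (ev k)" "ci k t \<in> range (ev k)"
proof -
  have F: "is_subfield (range (ev k))" by (rule range_ev_subfield[OF k])
  have h: "of_rat (1/2) \<in> range (ev k)" using subfield_rat[OF F, of "1/2"] .
  have a: "z k t \<in> range (ev k)" "z k (-t) \<in> range (ev k)" using z_in_range[OF k] by auto
  have "cr k t = (z k t + z k (-t)) * of_rat (1/2)"
    by (simp add: cr_def z_neg complex_add_cnj of_rat_divide)
  thus "cr k t \<in> range (ev k)" using sf_mult[OF F sf_add[OF F a] h] by simp
  have "ci k t = (z k t - z k (-t)) * of_rat (1/2)"
    by (simp add: ci_def z_neg complex_diff_cnj of_rat_divide)
  thus "ci k t \<in> range (ev k)" using sf_mult[OF F sf_diff[OF F a] h] by simp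
qed

lemma AB_sub: assumes k: "k \<ge> 1" shows "A_set k \<union> B_set k \<subseteq> range (ev k)"
  using cr_ci_in_range[OF k] unfolding A_img B_img by auto

lemma in_span_pm:
  assumes "y \<in> X \<or> - y \<in> X \<or> y = 0" shows "y \<in> qvs.span X"
  using assms
proof (elim disjE)
  assume "- y \<in> X" hence "- (- y) \<in> qvs.span X" by (intro qvs.span_neg qvs.span_base)
  thus ?thesis by simp
qed (auto intro: qvs.span_base qvs.span_zero)

lemma W_sub: assumes k: "k \<ge> 1" shows "W k \<subseteq> qvs.span (A_set k \<union> B_set k)"
proof
  fix w assume "w \<in> W k"
  then obtain j where w: "w = omega (2^k) ^ j" unfolding W_def by auto
  have "w = cr k (int j) + ci k (int j)"
    unfolding w cr_def ci_def z_def power_int_of_nat by (rule complex_eq)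
  moreover have "cr k (int j) \<in> qvs.span (A_set k \<union> B_set k)"
    using cr_cases[OF k, of "int j"] by (intro in_span_pm) auto
  moreover have "ci k (int j) \<in> qvs.span (A_set k \<union> B_set k)"
    using ci_cases[OF k, of "int j"] by (intro in_span_pm) auto
  ultimately show "w \<in> qvs.span (A_set k \<union> B_set k)" by (simp add: qvs.span_add)
qed

lemma coord:
  assumes fin: "finite X" and "y \<in> X \<or> - y \<in> X \<or> y = 0"
  shows "\<exists>c :: complex \<Rightarrow> rat. (\<forall>x\<in>X. c x \<in> {-1, 0, 1}) \<and> y = (\<Sum>x\<in>X. of_rat (c x) * x)"
  using assms
proof (elim disjE)
  assume y: "y \<in> X"
  show ?thesis
  proof -
    note True = fin
    have "(\<Sum>x\<in>X. of_rat (if x = y then 1 else 0) * x) = (\<Sum>x\<in>X. if x = y then y else 0)"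
      by (rule sum.cong) auto
    also have "\<dots> = y" using True y by (simp add: sum.delta')
    finally show ?thesis by (intro exI[of _ "\<lambda>x. if x = y then 1 else 0"]) auto
  qed
next
  assume y: "- y \<in> X"
  show ?thesis
  proof -
    note True = fin
    have "(\<Sum>x\<in>X. of_rat (if x = - y then -1 else 0) * x) = (\<Sum>x\<in>X. if x = - y then y else 0)"
      by (rule sum.cong) auto
    also have "\<dots> = y" using True y by (simp add: sum.delta')
    finally show ?thesis by (intro exI[of _ "\<lambda>x. if x = - y then -1 else 0"]) auto
  qed
next
  assume "y = 0" thus ?thesis by (intro exI[of _ "\<lambda>x. 0"]) auto
qed


lemma qvs_card_le_dim_spanning:
  assumes BV: "B \<subseteq> V"
    and VB: "V \<subseteq> qvs.span B"
    and fB: "finite B"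
    and dVB: "qvs.dim V \<ge> card B"
  shows "qvs.independent B"
proof -
  {
    fix a
    assume a: "a \<in> B" "a \<in> qvs.span (B - {a})"
    from a fB have c0: "card B \<noteq> 0"
      by auto
    from a fB have cb: "card (B - {a}) = card B - 1"
      by auto
    {
      fix x
      assume x: "x \<in> V"
      from a have eq: "insert a (B - {a}) = B"
        by blast
      from x VB have x': "x \<in> qvs.span B"
        by blast
      from qvs.span_trans[OF a(2), unfolded eq, OF x']
      have "x \<in> qvs.span (B - {a})" .
    }
    then have th1: "V \<subseteq> qvs.span (B - {a})"
      by blast
    have th2: "finite (B - {a})"
      using fB by auto
    from qvs.dim_le_card[OF th1 th2]
    have c: "qvs.dim V \<le> card (B - {a})" .
    from c c0 dVB cb have False by simp
  }
  then show ?thesis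
    unfolding qvs.dependent_def by blast
qed

theorem lemma8:
  fixes k :: nat
  assumes "k \<ge> 1"
  shows "rat_basis_of (A_set k \<union> B_set k) (rat_adjoin (omega (2^k))) \<and>
    (\<forall>t :: int.
      (\<exists>c :: complex \<Rightarrow> rat. (\<forall>x\<in>A_set k \<union> B_set k. c x \<in> {-1, 0, 1}) \<and>
          complex_of_real (Re (omega (2^k) powi t)) = (\<Sum>x\<in>A_set k \<union> B_set k. of_rat (c x) * x)) \<and>
      (\<exists>c :: complex \<Rightarrow> rat. (\<forall>x\<in>A_set k \<union> B_set k. c x \<in> {-1, 0, 1}) \<and>
          \<i> * complex_of_real (Im (omega (2^k) powi t)) = (\<Sum>x\<in>A_set k \<union> B_set k. of_rat (c x) * x)))"
proof -
  have k: "k \<ge> 1" by (rule assms)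
  let ?X = "A_set k \<union> B_set k"
  have fin: "finite ?X" and cardX: "card ?X = 2^(k-1)" using card_AB[OF k] by auto
  have spanX: "qvs.span ?X = qvs.span (W k)"
  proof
    show "qvs.span ?X \<subseteq> qvs.span (W k)" using AB_sub[OF k] span_W[OF k]
      by (intro qvs.span_minimal qvs.subspace_span) auto
    show "qvs.span (W k) \<subseteq> qvs.span ?X" using W_sub[OF k]
      by (intro qvs.span_minimal qvs.subspace_span)
  qed
  have dimW: "qvs.dim (qvs.span (W k)) = 2^(k-1)"
    using qvs.dim_span_eq_card_independent[OF indep_W[OF k]] card_W[OF k] by simp
  have sub: "?X \<subseteq> qvs.span (W k)" using qvs.span_superset[of ?X] spanX by simp
  have indep: "qvs.independent ?X"
    using qvs_card_le_dim_spanning[OF sub] cardX dimW fin spanX by simp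
  have basis: "rat_basis_of ?X (rat_adjoin (omega (2^k)))"
    unfolding rat_basis_of_def
  proof (intro conjI)
    show "finite ?X" by (rule fin)
    show "?X \<subseteq> rat_adjoin (omega (2^k))" using AB_sub[OF k] rat_adjoin_eq[OF k] by simp
    show "rat_independent ?X" using rat_indep_eq[OF fin] indep by simp
    show "rat_span ?X = rat_adjoin (omega (2^k))"
      using rat_span_eq[OF fin] spanX span_W[OF k] rat_adjoin_eq[OF k] by simp
  qed
  have coords: "(\<exists>c :: complex \<Rightarrow> rat. (\<forall>x\<in>?X. c x \<in> {-1, 0, 1}) \<and>
          complex_of_real (Re (omega (2^k) powi t)) = (\<Sum>x\<in>?X. of_rat (c x) * x)) \<and>
      (\<exists>c :: complex \<Rightarrow> rat. (\<forall>x\<in>?X. c x \<in> {-1, 0, 1}) \<and>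
          \<i> * complex_of_real (Im (omega (2^k) powi t)) = (\<Sum>x\<in>?X. of_rat (c x) * x))" for t
  proof
    have "cr k t \<in> ?X \<or> - cr k t \<in> ?X \<or> cr k t = 0" using cr_cases[OF k, of t] by auto
    from coord[OF fin this] show "\<exists>c :: complex \<Rightarrow> rat. (\<forall>x\<in>?X. c x \<in> {-1, 0, 1}) \<and>
          complex_of_real (Re (omega (2^k) powi t)) = (\<Sum>x\<in>?X. of_rat (c x) * x)"
      by (simp add: cr_def z_def)
    have "ci k t \<in> ?X \<or> - ci k t \<in> ?X \<or> ci k t = 0" using ci_cases[OF k, of t] by auto
    from coord[OF fin this] show "\<exists>c :: complex \<Rightarrow> rat. (\<forall>x\<in>?X. c x \<in> {-1, 0, 1}) \<and>
          \<i> * complex_of_real (Im (omega (2^k) powi t)) = (\<Sum>x\<in>?X. of_rat (c x) * x)"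
      by (simp add: ci_def z_def)
  qed
  show ?thesis using basis coords by blast
qed

end
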